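(* Let $(b,c)$ be a connected canonically compactifiable weighted graph over $X$. If $f\in\mathcal A$ satisfies $\mathcal L f=0$ on $X$, then $\|f\|_\infty=\|\hat f|_{\partial X}\|_\infty$.
   Context: Let $X$ be a countably infinite set. A weighted graph $(b,c)$ over $X$ consists of a symmetric $b:X\times X\to[0,\infty)$ with $b(x,x)=0$ and $\sum_{y}b(x,y)<\infty$ for all $x$, and $c:X\to[0,\infty)$; connected means any two distinct vertices are joined by a finite path of pairwise distinct vertices with consecutive ones satisfying $b>0$. The formal Laplacian acts on bounded $f$ by $\mathcal Lf(x)=\sum_y b(x,y)(f(x)-f(y))+c(x)f(x)$. Let $\widetilde Q(f)=\frac12\sum_{x,y}b(x,y)|f(x)-f(y)|^2+\sum_x c(x)|f(x)|^2$ and $\widetilde D=\{f:\widetilde Q(f)<\infty\}$; the graph is canonically compactifiable if $\widetilde D\subseteq\ell^\infty(X)$. Then $\mathcal A$ is the sup-norm closure of $\widetilde D$ in $\ell^\infty(X)$, $\mathcal A^+$ the smallest $C^*$-subalgebra of $\ell^\infty(X)$ containing $\mathcal A$ and $1$, $K$ the set of characters (nonzero multiplicative linear functionals) of $\mathcal A^+$ with the weak-$*$ topology, $\hat g(\gamma)=\gamma(g)$ for $g\in\mathcal A^+$, $\gamma\in K$. Via $x\mapsto\delta_x$ ($\delta_x(f)=f(x)$) we view $X\subseteq K$ and set $\partial X=K\setminus X$. *)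

theory Defs
  imports "HOL-Analysis.Analysis"
begin

definition weighted_graph :: "('x \<Rightarrow> 'x \<Rightarrow> real) \<Rightarrow> ('x \<Rightarrow> real) \<Rightarrow> bool" where
  "weighted_graph b c \<longleftrightarrow>
     (\<forall>x y. b x y \<ge> 0) \<and> (\<forall>x y. b x y = b y x) \<and> (\<forall>x. b x x = 0) \<and>
     (\<forall>x. (b x) summable_on UNIV) \<and> (\<forall>x. c x \<ge> 0)"

definition graph_connected :: "('x \<Rightarrow> 'x \<Rightarrow> real) \<Rightarrow> bool" where
  "graph_connected b \<longleftrightarrow>
     (\<forall>x y. x \<noteq> y \<longrightarrow> (\<exists>ps. distinct ps \<and> length ps \<ge> 2 \<and> hd ps = x \<and> last ps = y \<and>
        (\<forall>i. Suc i < length ps \<longrightarrow> b (ps ! i) (ps ! Suc i) > 0)))"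

text \<open>Functions of finite energy: the energy
  Q(f) = 1/2 sum b(x,y)|f x - f y|^2 + sum c(x)|f x|^2 (nonnegative terms) is finite.\<close>
definition Dtilde :: "('x \<Rightarrow> 'x \<Rightarrow> real) \<Rightarrow> ('x \<Rightarrow> real) \<Rightarrow> ('x \<Rightarrow> complex) set" where
  "Dtilde b c = {f. (\<lambda>(x,y). b x y * (cmod (f x - f y))\<^sup>2) summable_on UNIV \<and>
                    (\<lambda>x. c x * (cmod (f x))\<^sup>2) summable_on UNIV}"

definition ell_inf :: "('x \<Rightarrow> complex) set" where
  "ell_inf = {f. bounded (range f)}"

definition sup_norm :: "('x \<Rightarrow> complex) \<Rightarrow> real" where
  "sup_norm f = (SUP x. cmod (f x))"

definition canonically_compactifiable :: "('x \<Rightarrow> 'x \<Rightarrow> real) \<Rightarrow> ('x \<Rightarrow> real) \<Rightarrow> bool" where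
  "canonically_compactifiable b c \<longleftrightarrow> Dtilde b c \<subseteq> ell_inf"

definition sup_closure :: "('x \<Rightarrow> complex) set \<Rightarrow> ('x \<Rightarrow> complex) set" where
  "sup_closure S = {f \<in> ell_inf. \<forall>e>0. \<exists>g\<in>S. \<forall>x. cmod (f x - g x) < e}"

definition algA :: "('x \<Rightarrow> 'x \<Rightarrow> real) \<Rightarrow> ('x \<Rightarrow> real) \<Rightarrow> ('x \<Rightarrow> complex) set" where
  "algA b c = sup_closure (Dtilde b c)"

definition unital_cstar_subalg :: "('x \<Rightarrow> complex) set \<Rightarrow> bool" where
  "unital_cstar_subalg S \<longleftrightarrow> S \<subseteq> ell_inf \<and> (\<lambda>_. 1) \<in> S \<and>
     (\<forall>f\<in>S. \<forall>g\<in>S. (\<lambda>x. f x + g x) \<in> S \<and> (\<lambda>x. f x * g x) \<in> S) \<and>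
     (\<forall>f\<in>S. \<forall>a::complex. (\<lambda>x. a * f x) \<in> S) \<and>
     (\<forall>f\<in>S. (\<lambda>x. cnj (f x)) \<in> S) \<and>
     sup_closure S \<subseteq> S"

definition algAplus :: "('x \<Rightarrow> 'x \<Rightarrow> real) \<Rightarrow> ('x \<Rightarrow> real) \<Rightarrow> ('x \<Rightarrow> complex) set" where
  "algAplus b c = \<Inter>{S. unital_cstar_subalg S \<and> algA b c \<subseteq> S}"

text \<open>Characters of an algebra S: nonzero multiplicative linear functionals on S,
  represented extensionally (value 0 outside S).\<close>
definition characters :: "('x \<Rightarrow> complex) set \<Rightarrow> (('x \<Rightarrow> complex) \<Rightarrow> complex) set" where
  "characters S = {\<gamma>.
     (\<forall>f\<in>S. \<forall>g\<in>S. \<gamma> (\<lambda>x. f x + g x) = \<gamma> f + \<gamma> g \<and> \<gamma> (\<lambda>x. f x * g x) = \<gamma> f * \<gamma> g) \<and>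
     (\<forall>f\<in>S. \<forall>a. \<gamma> (\<lambda>x. a * f x) = a * \<gamma> f) \<and>
     (\<exists>f\<in>S. \<gamma> f \<noteq> 0) \<and>
     (\<forall>f. f \<notin> S \<longrightarrow> \<gamma> f = 0)}"

definition point_eval :: "('x \<Rightarrow> complex) set \<Rightarrow> 'x \<Rightarrow> (('x \<Rightarrow> complex) \<Rightarrow> complex)" where
  "point_eval S x = (\<lambda>f. if f \<in> S then f x else 0)"

definition boundary :: "('x \<Rightarrow> 'x \<Rightarrow> real) \<Rightarrow> ('x \<Rightarrow> real) \<Rightarrow> (('x \<Rightarrow> complex) \<Rightarrow> complex) set" where
  "boundary b c = characters (algAplus b c) - range (point_eval (algAplus b c))"

definition formal_laplacian :: "('x \<Rightarrow> 'x \<Rightarrow> real) \<Rightarrow> ('x \<Rightarrow> real) \<Rightarrow> ('x \<Rightarrow> complex) \<Rightarrow> 'x \<Rightarrow> complex" where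
  "formal_laplacian b c f x = (\<Sum>\<^sub>\<infinity>y. complex_of_real (b x y) * (f x - f y)) + complex_of_real (c x) * f x"

end

theory Submission
  imports Defs
begin

lemma ell_inf_iff: "f \<in> ell_inf \<longleftrightarrow> (\<exists>B. \<forall>x. cmod (f x) \<le> B)"
  unfolding ell_inf_def bounded_iff by auto

lemma ell_inf_unital: "unital_cstar_subalg (ell_inf :: ('x \<Rightarrow> complex) set)"
proof -
  have add: "(\<lambda>x. f x + g x) \<in> ell_inf" if "f \<in> ell_inf" "g \<in> ell_inf" for f g :: "'x \<Rightarrow> complex"
  proof -
    from that obtain B C where B: "\<forall>x. cmod (f x) \<le> B" and C: "\<forall>x. cmod (g x) \<le> C" by (auto simp: ell_inf_iff)
    have "cmod (f x + g x) \<le> B + C" for x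
      using norm_triangle_ineq[of "f x" "g x"] B[rule_format, of x] C[rule_format, of x] by linarith
    then have "\<forall>x. cmod (f x + g x) \<le> B + C" by blast
    then show ?thesis by (auto simp: ell_inf_iff)
  qed
  have mul: "(\<lambda>x. f x * g x) \<in> ell_inf" if "f \<in> ell_inf" "g \<in> ell_inf" for f g :: "'x \<Rightarrow> complex"
  proof -
    from that obtain B C where B: "\<forall>x. cmod (f x) \<le> B" and C: "\<forall>x. cmod (g x) \<le> C" by (auto simp: ell_inf_iff)
    have "cmod (f x * g x) \<le> B * C" for x
    proof -
      have b: "cmod (f x) \<le> B" and c: "cmod (g x) \<le> C" using B C by auto
      have "0 \<le> B" using b norm_ge_zero[of "f x"] by linarith
      then show ?thesis unfolding norm_mult using mult_mono[OF b c] by simp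
    qed
    then have "\<forall>x. cmod (f x * g x) \<le> B * C" by blast
    then show ?thesis by (auto simp: ell_inf_iff)
  qed
  have sc: "(\<lambda>x. a * f x) \<in> ell_inf" if "f \<in> ell_inf" for f :: "'x \<Rightarrow> complex" and a
  proof -
    from that obtain B where "\<forall>x. cmod (f x) \<le> B" by (auto simp: ell_inf_iff)
    then have "\<forall>x. cmod (a * f x) \<le> cmod a * B"
      by (simp add: mult_left_mono norm_mult)
    then show ?thesis by (auto simp: ell_inf_iff)
  qed
  have cn: "(\<lambda>x. cnj (f x)) \<in> ell_inf" if "f \<in> ell_inf" for f :: "'x \<Rightarrow> complex"
    using that by (auto simp: ell_inf_iff)
  have one: "(\<lambda>_. 1) \<in> (ell_inf :: ('x \<Rightarrow> complex) set)" by (auto simp: ell_inf_iff)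
  have "sup_closure ell_inf \<subseteq> ell_inf" unfolding sup_closure_def by blast
  then show ?thesis unfolding unital_cstar_subalg_def
    using add mul sc cn one by (intro conjI ballI allI subsetI) auto
qed

lemma sup_closure_mono: "S \<subseteq> T \<Longrightarrow> sup_closure S \<subseteq> sup_closure T"
  unfolding sup_closure_def by blast

lemma unitalD:
  assumes "unital_cstar_subalg S"
  shows "S \<subseteq> ell_inf" "(\<lambda>_. 1) \<in> S"
    "f \<in> S \<Longrightarrow> g \<in> S \<Longrightarrow> (\<lambda>x. f x + g x) \<in> S"
    "f \<in> S \<Longrightarrow> g \<in> S \<Longrightarrow> (\<lambda>x. f x * g x) \<in> S"
    "f \<in> S \<Longrightarrow> (\<lambda>x. a * f x) \<in> S"
    "f \<in> S \<Longrightarrow> (\<lambda>x. cnj (f x)) \<in> S"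
    "sup_closure S \<subseteq> S"
  using assms unfolding unital_cstar_subalg_def by blast+

lemma unital_Inter:
  assumes ne: "T \<in> F" and all: "\<And>S. S \<in> F \<Longrightarrow> unital_cstar_subalg S"
  shows "unital_cstar_subalg (\<Inter>F)"
proof -
  have "sup_closure (\<Inter>F) \<subseteq> S" if "S \<in> F" for S
  proof -
    have "sup_closure (\<Inter>F) \<subseteq> sup_closure S" using that by (intro sup_closure_mono) blast
    also have "\<dots> \<subseteq> S" using unitalD(7)[OF all[OF that]] .
    finally show ?thesis .
  qed
  then have sc: "sup_closure (\<Inter>F) \<subseteq> \<Inter>F" by blast
  have 1: "\<Inter>F \<subseteq> ell_inf" using unitalD(1)[OF all[OF ne]] ne by blast
  have 2: "(\<lambda>_. 1) \<in> \<Inter>F" using unitalD(2)[OF all] by (rule InterI)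
  have 3: "(\<lambda>x. f x + g x) \<in> \<Inter>F" "(\<lambda>x. f x * g x) \<in> \<Inter>F"
    if "f \<in> \<Inter>F" "g \<in> \<Inter>F" for f g
    using that unitalD(3,4)[OF all] by (meson InterD InterI)+
  have 4: "(\<lambda>x. a * f x) \<in> \<Inter>F" "(\<lambda>x. cnj (f x)) \<in> \<Inter>F" if "f \<in> \<Inter>F" for f a
    using that unitalD(5,6)[OF all] by (meson InterD InterI)+
  show ?thesis unfolding unital_cstar_subalg_def
    apply (intro conjI ballI allI)
    using sc 1 2 3 4 by simp_all
qed

lemma algAplus_unital: "unital_cstar_subalg (algAplus b c)"
  unfolding algAplus_def
  by (rule unital_Inter[of ell_inf]) (use ell_inf_unital in \<open>auto simp: algA_def sup_closure_def\<close>)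

lemma algA_sub: "algA b c \<subseteq> algAplus b c"
  unfolding algAplus_def by blast

lemma sup_norm_ge: "g \<in> ell_inf \<Longrightarrow> cmod (g x) \<le> sup_norm g"
  unfolding sup_norm_def
  by (rule cSUP_upper) (auto simp: ell_inf_def bounded_iff bdd_above_def)

lemma char_add: "\<gamma> \<in> characters S \<Longrightarrow> f \<in> S \<Longrightarrow> g \<in> S \<Longrightarrow> \<gamma> (\<lambda>x. f x + g x) = \<gamma> f + \<gamma> g"
  unfolding characters_def by blast
lemma char_mult: "\<gamma> \<in> characters S \<Longrightarrow> f \<in> S \<Longrightarrow> g \<in> S \<Longrightarrow> \<gamma> (\<lambda>x. f x * g x) = \<gamma> f * \<gamma> g"
  unfolding characters_def by blast
lemma char_scal: "\<gamma> \<in> characters S \<Longrightarrow> f \<in> S \<Longrightarrow> \<gamma> (\<lambda>x. a * f x) = a * \<gamma> f"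
  unfolding characters_def by blast

lemma char_one:
  assumes U: "unital_cstar_subalg S" and ch: "\<gamma> \<in> characters S"
  shows "\<gamma> (\<lambda>_. 1) = 1"
proof -
  from ch obtain f where f: "f \<in> S" "\<gamma> f \<noteq> 0" by (auto simp: characters_def)
  have "\<gamma> (\<lambda>x. 1 * f x) = \<gamma> (\<lambda>_. 1) * \<gamma> f"
    using char_mult[OF ch unitalD(2)[OF U] f(1)] by simp
  then have "\<gamma> f = \<gamma> (\<lambda>_. 1) * \<gamma> f" by simp
  with f(2) show ?thesis by simp
qed

lemma powers_in:
  assumes U: "unital_cstar_subalg S" and G: "G \<in> S"
  shows "(\<lambda>x. (\<Sum>k<n. G x ^ k)) \<in> S"
proof -
  have P: "(\<lambda>x. G x ^ k) \<in> S" for k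
  proof (induction k)
    case 0 then show ?case using unitalD(2)[OF U] by simp
  next
    case (Suc k)
    have "(\<lambda>x. G x * G x ^ k) \<in> S" using unitalD(4)[OF U G Suc] by simp
    then show ?case by simp
  qed
  show ?thesis
  proof (induction n)
    case 0
    have "(\<lambda>x. 0 * 1) \<in> S" using unitalD(5)[OF U unitalD(2)[OF U], of 0] by simp
    then show ?case by simp
  next
    case (Suc n)
    have "(\<lambda>x. (\<Sum>k<n. G x ^ k) + G x ^ n) \<in> S" using unitalD(3)[OF U Suc P] by simp
    then show ?case by simp
  qed
qed

lemma char_bound:
  assumes U: "unital_cstar_subalg S" and ch: "\<gamma> \<in> characters S" and g: "g \<in> S"
  shows "cmod (\<gamma> g) \<le> sup_norm g"
proof (rule ccontr)
  assume neg: "\<not> ?thesis"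
  define N where "N = sup_norm g"
  define l where "l = \<gamma> g"
  have gE: "g \<in> ell_inf" using unitalD(1)[OF U] g by blast
  have bnd: "cmod (g x) \<le> N" for x using sup_norm_ge[OF gE] N_def by simp
  have Nl: "N < cmod l" using neg N_def l_def by simp
  have N0: "0 \<le> N" using bnd[of undefined] norm_ge_zero[of "g undefined"] by linarith
  have l0: "l \<noteq> 0" using Nl N0 by auto
  define r where "r = N / cmod l"
  have r0: "0 \<le> r" and r1: "r < 1" using N0 Nl l0 by (auto simp: r_def field_simps)
  define G where "G = (\<lambda>x. (1/l) * g x)"
  have GS: "G \<in> S" unfolding G_def using unitalD(5)[OF U g] .
  have Gr: "cmod (G x) \<le> r" for x
    using bnd[of x] l0 by (auto simp: G_def r_def norm_mult norm_divide divide_right_mono)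
  have G1: "G x \<noteq> 1" for x using Gr[of x] r1 by auto
  define u where "u = (\<lambda>x. 1 / (l - g x))"
  have hu: "(l - g x) * u x = 1" for x
  proof -
    have "g x \<noteq> l" using bnd[of x] Nl by auto
    then show ?thesis by (simp add: u_def)
  qed
  have ux: "u x = (1/l) * (1 / (1 - G x))" for x
    using l0 by (simp add: u_def G_def field_simps)
  have ubnd: "cmod (u x) \<le> (1/cmod l) * (1/(1 - r))" for x
  proof -
    have "1 - r \<le> cmod (1 - G x)"
      using Gr[of x] norm_triangle_ineq2[of 1 "G x"] by simp
    moreover have "0 < 1 - r" using r1 by simp
    ultimately have pos: "0 < cmod (1 - G x) * (1 - r)"
      by (intro mult_pos_pos) linarith+
    have "1 / cmod (1 - G x) \<le> 1 / (1 - r)"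
      by (rule divide_left_mono) (use pos \<open>1 - r \<le> _\<close> in auto)
    then show ?thesis unfolding ux norm_mult norm_divide norm_one
      by (intro mult_left_mono) auto
  qed
  have uE: "u \<in> ell_inf" using ubnd by (auto simp: ell_inf_iff)
  have approx: "\<exists>p\<in>S. \<forall>x. cmod (u x - p x) < e" if e: "e > 0" for e
  proof -
    have "e * cmod l * (1 - r) > 0" using e l0 r1 by auto
    then obtain n where n: "r ^ n < e * cmod l * (1 - r)" using real_arch_pow_inv[OF _ r1] by blast
    define p where "p = (\<lambda>x. (1/l) * (\<Sum>k<n. G x ^ k))"
    have pS: "p \<in> S" unfolding p_def by (rule unitalD(5)[OF U powers_in[OF U GS]])
    have "cmod (u x - p x) < e" for x
    proof -
      have eq0: "u x - p x = (1/l) * (1 / (1 - G x)) - (1/l) * ((1 - G x ^ n) / (1 - G x))"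
        using G1[of x] unfolding ux p_def sum_gp_strict by simp
      have eq1: "(1/l) * (1 / (1 - G x)) - (1/l) * ((1 - G x ^ n) / (1 - G x))
          = (1/l) * ((1 - (1 - G x ^ n)) / (1 - G x))"
        by (simp only: right_diff_distrib[symmetric] diff_divide_distrib)
      have eq: "u x - p x = (1/l) * (G x ^ n / (1 - G x))"
        using eq0 eq1 by simp
      have "cmod (G x ^ n) \<le> r ^ n" unfolding norm_power
        by (rule power_mono[OF Gr norm_ge_zero])
      moreover have "1 - r \<le> cmod (1 - G x)"
        using Gr[of x] norm_triangle_ineq2[of 1 "G x"] by simp
      ultimately have "cmod (G x ^ n / (1 - G x)) \<le> r ^ n / (1 - r)"
        unfolding norm_divide using r1 r0
        by (intro frac_le) auto
      also have "\<dots> < e * cmod l" using n r1 by (simp add: field_simps)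
      finally have "cmod (G x ^ n / (1 - G x)) < e * cmod l" .
      then have "cmod (G x ^ n / (1 - G x)) / cmod l < e"
        using l0 by (simp add: pos_divide_less_eq)
      then show ?thesis unfolding eq norm_mult norm_divide[of 1 l] norm_one by simp
    qed
    with pS show ?thesis by blast
  qed
  have "u \<in> sup_closure S" unfolding sup_closure_def using uE approx by blast
  then have uS: "u \<in> S" using unitalD(7)[OF U] by blast
  have one: "(\<lambda>_. 1) \<in> S" using unitalD(2)[OF U] .
  have hS1: "(\<lambda>x. l * 1) \<in> S" using unitalD(5)[OF U one] .
  have hS2: "(\<lambda>x. (-1) * g x) \<in> S" using unitalD(5)[OF U g] .
  define h where "h = (\<lambda>x. l * 1 + (-1) * g x)"
  have hS: "h \<in> S" unfolding h_def using unitalD(3)[OF U hS1 hS2] by simp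
  have "\<gamma> h = \<gamma> (\<lambda>x. l * 1) + \<gamma> (\<lambda>x. (-1) * g x)"
    unfolding h_def using char_add[OF ch hS1 hS2] by simp
  also have "\<dots> = l * 1 + (-1) * l"
    using char_scal[OF ch one, of l] char_scal[OF ch g, of "-1"] char_one[OF U ch] l_def by simp
  finally have h0: "\<gamma> h = 0" by simp
  have "(\<lambda>x. h x * u x) = (\<lambda>_. 1)" using hu by (auto simp: h_def)
  then have "\<gamma> (\<lambda>_. 1) = \<gamma> h * \<gamma> u" using char_mult[OF ch hS uS] by simp
  then show False using h0 char_one[OF U ch] by simp
qed

lemma cmod_diff_sq: "(cmod (z - w))^2 = (cmod z)^2 - 2 * Re (z * cnj w) + (cmod w)^2"
proof -
  have "(cmod (z - w))^2 = (Re z - Re w)^2 + (Im z - Im w)^2" by (simp add: cmod_power2)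
  also have "\<dots> = (Re z^2 + Im z^2) - 2 * (Re z * Re w + Im z * Im w) + (Re w^2 + Im w^2)"
    by (simp add: power2_eq_square algebra_simps)
  finally show ?thesis by (simp add: cmod_power2)
qed

lemma max_local:
  assumes wg: "weighted_graph b c" and fE: "f \<in> ell_inf"
    and bnd: "\<forall>y. cmod (f y) \<le> cmod (f x)"
    and L: "formal_laplacian b c f x = 0" and pos: "b x y > 0"
  shows "f y = f x"
proof -
  define a where "a = f x"
  define M where "M = cmod a"
  have bnd': "cmod (f z) \<le> M" for z using bnd a_def M_def by auto
  have b0: "b x z \<ge> 0" for z using wg by (auto simp: weighted_graph_def)
  have c0: "c x \<ge> 0" using wg by (auto simp: weighted_graph_def)
  have bsum: "(b x) summable_on UNIV" using wg by (auto simp: weighted_graph_def)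
  define T where "T = (\<lambda>z. complex_of_real (b x z) * (a - f z))"
  have gs: "(\<lambda>z. norm (complex_of_real (b x z * (2*M)))) summable_on UNIV"
  proof -
    have "(\<lambda>z. b x z * (2*M)) summable_on UNIV" using bsum by (rule summable_on_cmult_left)
    moreover have "(\<lambda>z. norm (complex_of_real (b x z * (2*M)))) = (\<lambda>z. b x z * (2*M))"
    proof
      fix z
      have "0 \<le> b x z * (2*M)" using b0[of z] M_def by simp
      then show "norm (complex_of_real (b x z * (2*M))) = b x z * (2*M)"
        by (simp only: norm_of_real abs_of_nonneg)
    qed
    ultimately show ?thesis by simp
  qed
  have "(\<lambda>z. norm (T z)) summable_on UNIV"
  proof (rule Infinite_Sum.abs_summable_on_comparison_test[OF gs])
    fix z
    have "cmod (a - f z) \<le> 2 * M"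
      using norm_triangle_ineq4[of a "f z"] bnd'[of z] M_def by linarith
    then have "b x z * cmod (a - f z) \<le> b x z * (2*M)" using b0 by (intro mult_left_mono) auto
    then show "norm (T z) \<le> norm (complex_of_real (b x z * (2*M)))"
      using b0 M_def by (simp add: T_def norm_mult abs_mult)
  qed
  then have Ts: "T summable_on UNIV" by (rule abs_summable_summable)
  have Leq: "infsum T UNIV + complex_of_real (c x) * a = 0"
    using L by (simp add: formal_laplacian_def T_def a_def)
  have h1: "(T has_sum infsum T UNIV) UNIV" using Ts by (rule has_sum_infsum)
  have h2: "((\<lambda>z. T z * cnj a) has_sum (infsum T UNIV * cnj a)) UNIV"
    using h1 by (rule has_sum_cmult_left)
  have h3: "((\<lambda>z. Re (T z * cnj a)) has_sum Re (infsum T UNIV * cnj a)) UNIV"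
    using h2 by (rule has_sum_Re)
  have acnj: "a * cnj a = complex_of_real (M^2)"
    unfolding M_def by (rule complex_norm_square[symmetric])
  have "infsum T UNIV * cnj a = - (complex_of_real (c x) * (a * cnj a))"
    using Leq by (simp add: eq_neg_iff_add_eq_0[symmetric] algebra_simps)
  then have "Re (infsum T UNIV * cnj a) = - (c x * M^2)" using acnj by simp
  also have "\<dots> \<le> 0" using c0 by simp
  finally have le0: "Re (infsum T UNIV * cnj a) \<le> 0" .
  have treq: "Re (T z * cnj a) = b x z * (M^2 - Re (f z * cnj a))" for z
  proof -
    have "T z * cnj a = complex_of_real (b x z) * (a * cnj a - f z * cnj a)"
      by (simp add: T_def algebra_simps)
    then show ?thesis using acnj by simp
  qed
  have tnn: "Re (T z * cnj a) \<ge> 0" for z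
  proof -
    have "Re (f z * cnj a) \<le> cmod (f z * cnj a)" by (rule complex_Re_le_cmod)
    also have "\<dots> = cmod (f z) * M" by (simp add: norm_mult M_def)
    also have "\<dots> \<le> M * M" using bnd'[of z] M_def by (intro mult_right_mono) auto
    finally have "Re (f z * cnj a) \<le> M^2" by (simp add: power2_eq_square)
    then show ?thesis unfolding treq using b0[of z] by simp
  qed
  have "Re (T y * cnj a) = 0"
    using nonneg_has_sum_le_0D[OF h3 le0] tnn by blast
  then have "b x y * (M^2 - Re (f y * cnj a)) = 0" using treq by simp
  then have re: "Re (f y * cnj a) = M^2" using pos by simp
  have "(cmod (f y - a))^2 = (cmod (f y))^2 - 2 * Re (f y * cnj a) + M^2"
    using cmod_diff_sq M_def by simp
  also have "\<dots> \<le> 0" using re bnd'[of y] power_mono[OF bnd'[of y] norm_ge_zero] by simp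
  finally have "(cmod (f y - a))^2 \<le> 0" .
  then have "(cmod (f y - a))^2 = 0" using zero_le_power2[of "cmod (f y - a)"] by linarith
  then have "cmod (f y - a) = 0" by simp
  then show ?thesis using a_def by simp
qed

lemma max_const:
  assumes wg: "weighted_graph b c" and conn: "graph_connected b" and fE: "f \<in> ell_inf"
    and L: "\<forall>x. formal_laplacian b c f x = 0"
    and bnd: "\<forall>y. cmod (f y) \<le> cmod (f x0)"
  shows "f y = f x0"
proof (cases "y = x0")
  case True then show ?thesis by simp
next
  case False
  then obtain ps where ps: "distinct ps" "length ps \<ge> 2" "hd ps = x0" "last ps = y"
    "\<forall>i. Suc i < length ps \<longrightarrow> b (ps ! i) (ps ! Suc i) > 0"
    using conn unfolding graph_connected_def by metis
  have "i < length ps \<Longrightarrow> f (ps ! i) = f x0" for i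
  proof (induction i)
    case 0
    then have "ps \<noteq> []" by auto
    then show ?case using ps(3) by (simp add: hd_conv_nth)
  next
    case (Suc i)
    then have IH: "f (ps ! i) = f x0" by simp
    have "f (ps ! Suc i) = f (ps ! i)"
      by (rule max_local[OF wg fE _ L[rule_format]]) (use bnd IH ps(5) Suc.prems in auto)
    then show ?case using IH by simp
  qed
  moreover have "ps \<noteq> []" using ps(2) by auto
  moreover have "length ps - 1 < length ps" using ps(2) by simp
  ultimately have "f (ps ! (length ps - 1)) = f x0" by blast
  then show ?thesis using ps(4) \<open>ps \<noteq> []\<close> by (simp add: last_conv_nth)
qed

lemma indicator_D:
  assumes wg: "weighted_graph b c"
  shows "(\<lambda>y. if y = x then (1::complex) else 0) \<in> Dtilde b c"
proof -
  define d where "d = (\<lambda>y. if y = x then (1::complex) else 0)"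
  have bsym: "b y z = b z y" for y z using wg by (auto simp: weighted_graph_def)
  have bxx: "b x x = 0" using wg by (auto simp: weighted_graph_def)
  have bs: "(b x) summable_on UNIV" using wg by (auto simp: weighted_graph_def)
  have s1: "(\<lambda>p. if fst p = x then b x (snd p) else 0) summable_on UNIV"
  proof -
    have "(\<lambda>p. b x (snd p)) summable_on (Pair x ` UNIV)"
      by (subst summable_on_reindex) (auto simp: o_def bs inj_on_def)
    then show ?thesis
      by (rule summable_on_cong_neutral[THEN iffD1, rotated -1]) auto
  qed
  have s2: "(\<lambda>p. if snd p = x then b (fst p) x else 0) summable_on UNIV"
  proof -
    have "(\<lambda>p. b (fst p) x) summable_on ((\<lambda>y. (y, x)) ` UNIV)"
      by (subst summable_on_reindex) (auto simp: o_def bsym[of _ x] bs inj_on_def)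
    then show ?thesis
      by (rule summable_on_cong_neutral[THEN iffD1, rotated -1]) auto
  qed
  have eq: "(\<lambda>(y,z). b y z * (cmod (d y - d z))\<^sup>2) =
      (\<lambda>p. (if fst p = x then b x (snd p) else 0) + (if snd p = x then b (fst p) x else 0))"
    by (auto simp: d_def bxx)
  have t1: "(\<lambda>(y,z). b y z * (cmod (d y - d z))\<^sup>2) summable_on UNIV"
    unfolding eq by (rule summable_on_add[OF s1 s2])
  have t2: "(\<lambda>y. c y * (cmod (d y))\<^sup>2) summable_on UNIV"
  proof -
    have "(\<lambda>y. c y * (cmod (d y))\<^sup>2) summable_on {x}" by simp
    then show ?thesis
      by (rule summable_on_cong_neutral[THEN iffD1, rotated -1]) (auto simp: d_def)
  qed
  show ?thesis using t1 t2 unfolding Dtilde_def d_def by simp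
qed

locale ultrafilter =
  fixes F :: "'a filter"
  assumes proper: "F \<noteq> bot"
  assumes ultra: "eventually P F \<or> eventually (\<lambda>x. \<not> P x) F"

lemma extend_filter: "frequently P F \<Longrightarrow> inf F (principal {x. P x}) \<noteq> bot"
  by (simp add: trivial_limit_def eventually_inf_principal not_eventually)

lemma max_filter_ultrafilter:
  assumes "F \<noteq> bot"
  assumes max: "\<And>G. G \<noteq> bot \<Longrightarrow> G \<le> F \<Longrightarrow> F = G"
  shows "ultrafilter F"
proof
  show "eventually P F \<or> (\<forall>\<^sub>Fx in F. \<not> P x)" for P
  proof (rule disjCI)
    assume "\<not> (\<forall>\<^sub>Fx in F. \<not> P x)"
    then have "inf F (principal {x. P x}) \<noteq> bot"
      by (simp add: not_eventually extend_filter)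
    then have F: "F = inf F (principal {x. P x})"
      by (rule max) simp
    show "eventually P F"
      by (subst F) (simp add: eventually_inf_principal)
  qed
qed fact

lemma ex_max_ultrafilter:
  fixes F :: "'a filter"
  assumes F: "F \<noteq> bot"
  shows "\<exists>U\<le>F. ultrafilter U"
proof -
  let ?X = "{G. G \<noteq> bot \<and> G \<le> F}"
  let ?R = "{(b, a). a \<noteq> bot \<and> a \<le> b \<and> b \<le> F}"

  have bot_notin_R: "c \<in> Chains ?R \<Longrightarrow> bot \<notin> c" for c
    by (auto simp: Chains_def)

  have [simp]: "Field ?R = ?X"
    by (auto simp: Field_def bot_unique)

  have "\<exists>m\<in>Field ?R. \<forall>a\<in>Field ?R. (m, a) \<in> ?R \<longrightarrow> a = m" (is "\<exists>m\<in>?A. ?B m")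
  proof (rule Zorns_po_lemma)
    show "Partial_order ?R"
      by (auto simp: partial_order_on_def preorder_on_def
          antisym_def refl_on_def trans_def Field_def bot_unique)
    show "\<exists>u\<in>Field ?R. \<forall>a\<in>C. (a, u) \<in> ?R" if C: "C \<in> Chains ?R" for C
    proof (simp, intro exI conjI ballI)
      have Inf_C: "Inf C \<noteq> bot" "Inf C \<le> F" if "C \<noteq> {}"
      proof -
        from C that have "Inf C = bot \<longleftrightarrow> (\<exists>x\<in>C. x = bot)"
          unfolding trivial_limit_def by (intro eventually_Inf_base) (auto simp: Chains_def)
        with C show "Inf C \<noteq> bot"
          by (simp add: bot_notin_R)
        from that obtain x where "x \<in> C" by auto
        with C show "Inf C \<le> F"
          by (auto intro!: Inf_lower2[of x] simp: Chains_def)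
      qed
      then have [simp]: "inf F (Inf C) = (if C = {} then F else Inf C)"
        using C by (auto simp add: inf_absorb2)
      from C show "inf F (Inf C) \<noteq> bot"
        by (simp add: F Inf_C)
      from C show "inf F (Inf C) \<le> F"
        by (simp add: Chains_def Inf_C F)
      with C show "inf F (Inf C) \<le> x" "x \<le> F" if "x \<in> C" for x
        using that  by (auto intro: Inf_lower simp: Chains_def)
    qed
  qed
  then obtain U where U: "U \<in> ?A" "?B U" ..
  show ?thesis
  proof
    from U show "U \<le> F \<and> ultrafilter U"
      by (auto intro!: max_filter_ultrafilter)
  qed
qed

lemma ultra_lim:
  fixes g :: "'a \<Rightarrow> complex"
  assumes U: "ultrafilter U" and B: "\<forall>x. cmod (g x) \<le> B"
  shows "\<exists>z. (g \<longlongrightarrow> z) U"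
proof -
  have ne: "filtermap g U \<noteq> bot" using ultrafilter.proper[OF U] by (simp add: filtermap_bot_iff)
  have ev: "eventually (\<lambda>y. y \<in> cball 0 B) (filtermap g U)"
    using B by (simp add: eventually_filtermap)
  obtain z where z: "inf (nhds z) (filtermap g U) \<noteq> bot"
    using compact_cball[of 0 B] ne ev unfolding compact_filter by blast
  have "(g \<longlongrightarrow> z) U"
    unfolding tendsto_def
  proof (intro allI impI)
    fix S assume S: "open S" "z \<in> S"
    show "eventually (\<lambda>x. g x \<in> S) U"
    proof (rule ccontr)
      assume "\<not> ?thesis"
      then have "eventually (\<lambda>x. \<not> g x \<in> S) U" using ultrafilter.ultra[OF U] by blast
      then have e1: "eventually (\<lambda>y. y \<notin> S) (filtermap g U)" by (simp add: eventually_filtermap)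
      have e2: "eventually (\<lambda>y. y \<in> S) (nhds z)" using S by (rule eventually_nhds_in_open)
      have "eventually (\<lambda>_. False) (inf (nhds z) (filtermap g U))"
        unfolding eventually_inf using e1 e2 by blast
      then show False using z by (simp add: trivial_limit_def)
    qed
  qed
  then show ?thesis ..
qed

theorem mainTheorem12:
  fixes b :: "'x \<Rightarrow> 'x \<Rightarrow> real" and c :: "'x \<Rightarrow> real" and f :: "'x \<Rightarrow> complex"
  assumes "countable (UNIV :: 'x set)" and "infinite (UNIV :: 'x set)"
    and "weighted_graph b c" and "graph_connected b"
    and "canonically_compactifiable b c"
    and "f \<in> algA b c"
    and "\<forall>x. formal_laplacian b c f x = 0"
  shows "sup_norm f = (SUP \<gamma>\<in>boundary b c. cmod (\<gamma> f))"
proof -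
  let ?S = "algAplus b c"
  have US: "unital_cstar_subalg ?S" by (rule algAplus_unital)
  have fS: "f \<in> ?S" using assms(6) algA_sub by blast
  have fE: "f \<in> ell_inf" using assms(6) unfolding algA_def sup_closure_def by blast
  define M where "M = sup_norm f"
  have fle: "cmod (f x) \<le> M" for x using sup_norm_ge[OF fE] M_def by simp
  have bdd: "bdd_above (range (\<lambda>x. cmod (f x)))" using fle by (intro bdd_aboveI2) auto
  have infs: "infinite {x. M - e < cmod (f x)}" if e: "e > 0" for e
  proof
    define A where "A = {x. M - e < cmod (f x)}"
    assume fin: "finite {x. M - e < cmod (f x)}"
    then have finA: "finite A" by (simp add: A_def)
    have "M - e < (SUP x. cmod (f x))" using e unfolding M_def sup_norm_def by simp
    then obtain x1 where "M - e < cmod (f x1)" using less_cSUP_iff[OF _ bdd] by blast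
    then have Ane: "A \<noteq> {}" by (auto simp: A_def)
    define m where "m = Max ((\<lambda>x. cmod (f x)) ` A)"
    have "m \<in> (\<lambda>x. cmod (f x)) ` A" unfolding m_def using finA Ane by (intro Max_in) auto
    then obtain x0 where x0: "x0 \<in> A" "cmod (f x0) = m" by blast
    have mge: "cmod (f y) \<le> m" if "y \<in> A" for y
      unfolding m_def using finA that by (intro Max_ge) auto
    have allb: "\<forall>y. cmod (f y) \<le> cmod (f x0)"
    proof
      fix y show "cmod (f y) \<le> cmod (f x0)"
      proof (cases "y \<in> A")
        case True then show ?thesis using mge x0 by simp
      next
        case False then have "cmod (f y) \<le> M - e" by (auto simp: A_def)
        moreover have "M - e < cmod (f x0)" using x0 by (auto simp: A_def)
        ultimately show ?thesis by simp
      qed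
    qed
    have fc: "f y = f x0" for y by (rule max_const[OF assms(3) assms(4) fE assms(7) allb])
    have "M - e < cmod (f x0)" using x0 by (auto simp: A_def)
    then have "M - e < cmod (f y)" for y using fc[of y] by simp
    then have "A = UNIV" unfolding A_def by auto
    then show False using finA assms(2) by simp
  qed
  define F where "F = inf cofinite (filtercomap (\<lambda>x. cmod (f x)) (nhds M))"
  have Fne: "F \<noteq> bot"
  proof
    assume "F = bot"
    then have "eventually (\<lambda>_. False) F" by simp
    then obtain Q R where Q: "eventually Q cofinite"
      and R: "eventually R (filtercomap (\<lambda>x. cmod (f x)) (nhds M))"
      and QR: "\<forall>x. Q x \<and> R x \<longrightarrow> False"
      unfolding F_def eventually_inf by blast
    from R obtain T where T: "open T" "M \<in> T" "\<forall>x. cmod (f x) \<in> T \<longrightarrow> R x"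
      unfolding eventually_filtercomap_nhds by blast
    obtain e where e: "e > 0" "ball M e \<subseteq> T" using openE[OF T(1,2)] by blast
    have "{x. M - e < cmod (f x)} \<subseteq> {x. \<not> Q x}"
    proof
      fix x assume "x \<in> {x. M - e < cmod (f x)}"
      then have "dist M (cmod (f x)) < e" using fle[of x] by (simp add: dist_real_def)
      then have "cmod (f x) \<in> T" using e by auto
      then have "R x" using T by blast
      then show "x \<in> {x. \<not> Q x}" using QR by blast
    qed
    moreover have "finite {x. \<not> Q x}" using Q by (simp add: eventually_cofinite)
    ultimately show False using infs[OF e(1)] finite_subset by blast
  qed
  obtain U where UF: "U \<le> F" and U: "ultrafilter U" using ex_max_ultrafilter[OF Fne] by blast
  have Unb: "U \<noteq> bot" using ultrafilter.proper[OF U] .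
  have Ucof: "U \<le> cofinite" using UF unfolding F_def by (meson inf_le1 order_trans)
  have Ucomap: "U \<le> filtercomap (\<lambda>x. cmod (f x)) (nhds M)"
    using UF unfolding F_def by (meson inf_le2 order_trans)
  have Ulim: "((\<lambda>x. cmod (f x)) \<longlongrightarrow> M) U"
    by (rule tendsto_mono[OF Ucomap filterlim_filtercomap])
  define \<gamma> where "\<gamma> = (\<lambda>g. if g \<in> ?S then Lim U g else 0)"
  have lim: "(g \<longlongrightarrow> \<gamma> g) U" if "g \<in> ?S" for g
  proof -
    have "g \<in> ell_inf" using that unitalD(1)[OF US] by blast
    then obtain B where "\<forall>x. cmod (g x) \<le> B" by (auto simp: ell_inf_iff)
    then obtain z where z: "(g \<longlongrightarrow> z) U" using ultra_lim[OF U] by blast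
    then have "Lim U g = z" using Unb by (intro tendsto_Lim) auto
    then show ?thesis using z that by (simp add: \<gamma>_def)
  qed
  have one: "(\<lambda>_. 1) \<in> ?S" by (rule unitalD(2)[OF US])
  have \<gamma>ch: "\<gamma> \<in> characters ?S"
    unfolding characters_def
  proof (intro CollectI conjI ballI allI impI)
    fix g h assume g: "g \<in> ?S" and h: "h \<in> ?S"
    show "\<gamma> (\<lambda>x. g x + h x) = \<gamma> g + \<gamma> h"
      using tendsto_unique[OF Unb lim[OF unitalD(3)[OF US g h]] tendsto_add[OF lim[OF g] lim[OF h]]] .
    show "\<gamma> (\<lambda>x. g x * h x) = \<gamma> g * \<gamma> h"
      using tendsto_unique[OF Unb lim[OF unitalD(4)[OF US g h]] tendsto_mult[OF lim[OF g] lim[OF h]]] .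
  next
    fix g a assume g: "g \<in> ?S"
    show "\<gamma> (\<lambda>x. a * g x) = a * \<gamma> g"
      using tendsto_unique[OF Unb lim[OF unitalD(5)[OF US g]] tendsto_mult[OF tendsto_const lim[OF g]]] .
  next
    have "\<gamma> (\<lambda>_. 1) = 1" using tendsto_unique[OF Unb lim[OF one] tendsto_const] .
    then show "\<exists>g\<in>?S. \<gamma> g \<noteq> 0" using one by force
  next
    fix g assume "g \<notin> ?S" then show "\<gamma> g = 0" by (simp add: \<gamma>_def)
  qed
  have \<gamma>np: "\<gamma> \<notin> range (point_eval ?S)"
  proof
    assume "\<gamma> \<in> range (point_eval ?S)"
    then obtain x where x: "\<gamma> = point_eval ?S x" by blast
    define d where "d = (\<lambda>y. if y = x then (1::complex) else 0)"
    have dD: "d \<in> Dtilde b c" unfolding d_def by (rule indicator_D[OF assms(3)])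
    have dE: "d \<in> ell_inf" by (auto simp: ell_inf_iff d_def intro!: exI[of _ 1])
    have "d \<in> algA b c" unfolding algA_def sup_closure_def using dD dE
      by (auto intro!: bexI[of _ d])
    then have dS: "d \<in> ?S" using algA_sub by blast
    have "eventually (\<lambda>y. y \<noteq> x) cofinite" by (simp add: eventually_cofinite)
    then have "eventually (\<lambda>y. y \<noteq> x) U" using Ucof by (rule filter_leD[rotated])
    then have "eventually (\<lambda>y. d y = 0) U" by (rule eventually_mono) (simp add: d_def)
    then have "(d \<longlongrightarrow> 0) U" by (rule tendsto_eventually)
    then have "\<gamma> d = 0" using tendsto_unique[OF Unb lim[OF dS]] by blast
    moreover have "\<gamma> d = 1" using x dS by (simp add: point_eval_def d_def)
    ultimately show False by simp
  qed
  have \<gamma>b: "\<gamma> \<in> boundary b c" unfolding boundary_def using \<gamma>ch \<gamma>np by blast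
  have \<gamma>f: "cmod (\<gamma> f) = M"
    using tendsto_unique[OF Unb tendsto_norm[OF lim[OF fS]] Ulim] by simp
  have bnd: "cmod (\<gamma>' f) \<le> M" if "\<gamma>' \<in> boundary b c" for \<gamma>'
  proof -
    have "\<gamma>' \<in> characters ?S" using that by (simp add: boundary_def)
    then show ?thesis using char_bound[OF US _ fS] M_def by simp
  qed
  have "(SUP \<gamma>\<in>boundary b c. cmod (\<gamma> f)) = M"
  proof (rule antisym)
    show "(SUP \<gamma>\<in>boundary b c. cmod (\<gamma> f)) \<le> M"
      using \<gamma>b bnd by (intro cSUP_least) auto
    show "M \<le> (SUP \<gamma>\<in>boundary b c. cmod (\<gamma> f))"
    proof -
      have "bdd_above ((\<lambda>\<gamma>. cmod (\<gamma> f)) ` boundary b c)"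
        using bnd by (intro bdd_aboveI2) auto
      then show ?thesis unfolding \<gamma>f[symmetric] using \<gamma>b by (intro cSUP_upper) auto
    qed
  qed
  then show ?thesis using M_def by simp
qed

end
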